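(* Let $q$ be a prime power and $m\ge1$. Let $H\subseteq\mathbb{F}_{q^m}$ be an $\mathbb{F}_q$-subspace of dimension $h$ over $\mathbb{F}_q$ with $1\le h\le m-2$. Let $x\in\mathbb{F}_{q^m}\setminus H$ and $y\in\mathbb{F}_{q^m}$. Then there exists $\alpha\in\mathbb{F}_{q^m}\setminus H$ such that $x+\alpha y\notin H\oplus\langle\alpha\rangle$, where $\langle\alpha\rangle$ denotes the $\mathbb{F}_q$-span of $\alpha$. *)

theory Defs
  imports "HOL-Computational_Algebra.Primes"
begin

definition is_subfield :: "'a::field set \<Rightarrow> bool" where
  "is_subfield F \<longleftrightarrow> 0 \<in> F \<and> 1 \<in> F \<and>
     (\<forall>x\<in>F. \<forall>y\<in>F. x + y \<in> F \<and> x * y \<in> F) \<and>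
     (\<forall>x\<in>F. - x \<in> F) \<and> (\<forall>x\<in>F. x \<noteq> 0 \<longrightarrow> inverse x \<in> F)"

definition F_subspace :: "'a::field set \<Rightarrow> 'a set \<Rightarrow> bool" where
  "F_subspace F H \<longleftrightarrow> 0 \<in> H \<and> (\<forall>x\<in>H. \<forall>y\<in>H. x + y \<in> H) \<and>
     (\<forall>c\<in>F. \<forall>x\<in>H. c * x \<in> H)"

definition F_span :: "'a::field set \<Rightarrow> 'a set \<Rightarrow> 'a set" where
  "F_span F S = {\<Sum>s\<in>T. c s * s | T c. finite T \<and> T \<subseteq> S \<and> (\<forall>s\<in>T. c s \<in> F)}"

definition F_indep :: "'a::field set \<Rightarrow> 'a set \<Rightarrow> bool" where
  "F_indep F S \<longleftrightarrow> (\<forall>T c. finite T \<and> T \<subseteq> S \<and> (\<forall>s\<in>T. c s \<in> F) \<and>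
       (\<Sum>s\<in>T. c s * s) = 0 \<longrightarrow> (\<forall>s\<in>T. c s = 0))"

definition F_dim_eq :: "'a::field set \<Rightarrow> 'a set \<Rightarrow> nat \<Rightarrow> bool" where
  "F_dim_eq F H h \<longleftrightarrow> (\<exists>B. finite B \<and> card B = h \<and> B \<subseteq> H \<and> F_indep F B \<and> F_span F B = H)"

text \<open>The sum H + <a> (direct when a is not in H).\<close>
definition F_sum_line :: "'a::field set \<Rightarrow> 'a set \<Rightarrow> 'a \<Rightarrow> 'a set" where
  "F_sum_line F H a = {u + c * a | u c. u \<in> H \<and> c \<in> F}"

definition prime_power :: "nat \<Rightarrow> bool" where
  "prime_power q \<longleftrightarrow> (\<exists>p k. prime p \<and> k \<ge> 1 \<and> q = p ^ k)"

end

theory Submission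
  imports Defs "HOL-Library.FuncSet"
begin

lemma span_card_le:
  fixes F :: "'a::field set"
  assumes "finite B" "0 \<in> F" "finite F"
  shows "card (F_span F B) \<le> card F ^ card B"
proof -
  have sub: "F_span F B \<subseteq> (\<lambda>c. \<Sum>s\<in>B. c s * s) ` (B \<rightarrow>\<^sub>E F)"
  proof
    fix z assume "z \<in> F_span F B"
    then obtain T c where T: "finite T" "T \<subseteq> B" "\<forall>s\<in>T. c s \<in> F" and z: "z = (\<Sum>s\<in>T. c s * s)"
      unfolding F_span_def by blast
    define c' where "c' = restrict (\<lambda>s. if s \<in> T then c s else 0) B"
    have "c' \<in> B \<rightarrow>\<^sub>E F" using T assms(2) unfolding c'_def by auto
    moreover have "(\<Sum>s\<in>B. c' s * s) = (\<Sum>s\<in>B. if s \<in> T then c s * s else 0)"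
      unfolding c'_def by (rule sum.cong) auto
    moreover have "\<dots> = (\<Sum>s\<in>T. c s * s)"
      using T assms(1) by (simp add: sum.If_cases Int_absorb1 Int_commute)
    ultimately show "z \<in> (\<lambda>c. \<Sum>s\<in>B. c s * s) ` (B \<rightarrow>\<^sub>E F)" using z by force
  qed
  have "card (F_span F B) \<le> card ((\<lambda>c. \<Sum>s\<in>B. c s * s) ` (B \<rightarrow>\<^sub>E F))"
    by (rule card_mono[OF _ sub]) (use assms in \<open>auto intro!: finite_PiE\<close>)
  also have "\<dots> \<le> card (B \<rightarrow>\<^sub>E F)" by (rule card_image_le) (use assms in \<open>auto intro!: finite_PiE\<close>)
  also have "\<dots> = card F ^ card B" using assms by (simp add: card_PiE)
  finally show ?thesis .
qed

theorem lemma3p7: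
  fixes F :: "'a::{field,finite} set" and q m h :: nat and H :: "'a set" and x y :: 'a
  assumes "is_subfield F" and "card F = q" and "prime_power q"
    and "m \<ge> 1" and "card (UNIV :: 'a set) = q ^ m"
    and "F_subspace F H" and "F_dim_eq F H h" and "1 \<le> h" and "h \<le> m - 2"
    and "x \<notin> H"
  shows "\<exists>\<alpha>. \<alpha> \<notin> H \<and> x + \<alpha> * y \<notin> F_sum_line F H \<alpha>"
proof -
  have F0: "0 \<in> F" and F1: "1 \<in> F" using assms(1) unfolding is_subfield_def by auto
  have "{0,1} \<subseteq> F" using F0 F1 by auto
  hence "card {0::'a,1} \<le> q" using assms(2) by (metis card_mono finite)
  hence q2: "q \<ge> 2" by simp
  obtain B where B: "finite B" "card B = h" "F_span F B = H"
    using assms(7) unfolding F_dim_eq_def by blast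
  have cH: "card H \<le> q ^ h" using span_card_le[OF B(1) F0] B assms(2) by auto
  define S where "S = H \<union> (\<lambda>(c,u). (u - x) / (y - c)) ` (F \<times> H)"
  have "card S \<le> card H + card ((\<lambda>(c,u). (u - x) / (y - c)) ` (F \<times> H))"
    unfolding S_def by (rule card_Un_le)
  also have "card ((\<lambda>(c,u). (u - x) / (y - c)) ` (F \<times> H)) \<le> card (F \<times> H)"
    by (rule card_image_le) simp
  also have "card (F \<times> H) = q * card H" using assms(2) by (simp add: card_cartesian_product)
  finally have "card S \<le> card H + q * card H" by simp
  also have "\<dots> \<le> q ^ h + q * q ^ h" using cH by (intro add_mono mult_left_mono) auto
  also have "\<dots> < q * q ^ h + q * q ^ h"
    using q2 by (simp add: power_strict_increasing_iff)
  also have "\<dots> = 2 * (q * q ^ h)" by simp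
  also have "\<dots> \<le> q * (q * q ^ h)" using q2 by (intro mult_right_mono) auto
  also have "\<dots> = q ^ (h + 2)" by (simp add: power_add)
  also have "\<dots> \<le> q ^ m" using assms(8,9) q2 by (intro power_increasing) auto
  finally have "card S < card (UNIV :: 'a set)" using assms(5) by simp
  then obtain \<alpha> where a: "\<alpha> \<notin> S" by (metis UNIV_I card_mono finite not_le subsetI)
  show ?thesis
  proof (intro exI conjI)
    show "\<alpha> \<notin> H" using a S_def by auto
    show "x + \<alpha> * y \<notin> F_sum_line F H \<alpha>"
    proof
      assume "x + \<alpha> * y \<in> F_sum_line F H \<alpha>"
      then obtain u c where u: "u \<in> H" "c \<in> F" "x + \<alpha> * y = u + c * \<alpha>"
        unfolding F_sum_line_def by blast
      show False
      proof (cases "c = y")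
        case True
        with u have "x = u" by (simp add: mult.commute)
        with u assms(10) show False by simp
      next
        case False
        hence "\<alpha> = (u - x) / (y - c)" using u(3)
          by (simp add: field_simps)
        hence "\<alpha> \<in> S" unfolding S_def using u by force
        with a show False by simp
      qed
    qed
  qed
qed

end
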